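(* There exists a family of smooth functions $\{\varphi_t:[0,\frac{\pi}{2}]\to[0,1]\}_{t\in(0,1]}$, depending continuously on $t$, such that for each $t\in(0,1]$: (1) all even-order derivatives of $\varphi_t$ vanish at $0$, $\varphi_t'(0)=1$, all odd-order derivatives of $\varphi_t$ vanish at $\frac{\pi}{2}$, and $\varphi_t(\frac{\pi}{2})>0$; (2) $\varphi_t(r)\le 3t\sin(r)$ for all $r\in(t,\frac{\pi}{2}]$; (3) on $(0,\frac{\pi}{2})$, $$\frac{-\varphi_t''}{\varphi_t}\ \ge\ \tan\cdot\frac{\varphi_t'}{\varphi_t}\ \ge\ \max\{t,1-t\}.$$
   Context: Here $\tan\cdot\frac{\varphi_t'}{\varphi_t}$ denotes the function $r\mapsto\tan(r)\varphi_t'(r)/\varphi_t(r)$. *)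

theory Defs
  imports "HOL-Analysis.Analysis"
begin

text \<open>D is the sequence of all higher derivatives of f on the set S (one-sided at
  boundary points of a closed interval): D 0 = f and D (Suc k) is the derivative of
  D k within S at every point of S. A function admitting such D on [a,b] is smooth
  there, and on a nondegenerate interval D is uniquely determined.\<close>
definition higher_derivs_on :: "(nat \<Rightarrow> real \<Rightarrow> real) \<Rightarrow> (real \<Rightarrow> real) \<Rightarrow> real set \<Rightarrow> bool" where
  "higher_derivs_on D f S \<longleftrightarrow> D 0 = f \<and>
     (\<forall>k. \<forall>x\<in>S. (D k has_real_derivative D (Suc k) x) (at x within S))"

end

theory Submission imports Defs "HOL-Complex_Analysis.Complex_Analysis" begin


lemma hd_complex:
  assumes "F holomorphic_on S" "open S" "\<And>x. complex_of_real x \<in> S"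
  shows "((\<lambda>x. Re ((deriv^^k) F (of_real x))) has_real_derivative
            Re ((deriv^^(Suc k)) F (of_real x))) (at x within T)"
proof -
  have "((deriv ^^ k) F has_field_derivative (deriv ^^ (Suc k)) F (of_real x)) (at (of_real x))"
    using has_field_derivative_higher_deriv[OF assms(1,2) assms(3)] by blast
  then have "((\<lambda>x. (deriv ^^ k) F (of_real x)) has_vector_derivative (deriv ^^ (Suc k)) F (of_real x)) (at x within T)"
    by (rule has_vector_derivative_real_field)
  then show ?thesis by (rule has_field_derivative_Re)
qed

lemma even_vanish:
  fixes F :: "complex \<Rightarrow> complex"
  assumes "F holomorphic_on S" "open S" "0 \<in> S" "\<And>z. z \<in> S \<Longrightarrow> -z \<in> S"
    "\<And>z. F (-z) = - F z"
  shows "(deriv^^(2*k)) F 0 = 0"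
proof -
  have sub: "(\<lambda>w. (-1)*w + 0) ` S \<subseteq> S" using assms(4) by auto
  have "(F \<circ> (\<lambda>w. (-1)*w + 0)) holomorphic_on S"
    by (rule holomorphic_on_compose_gen[OF _ assms(1) sub]) (intro holomorphic_intros)
  then have h1: "(\<lambda>w. F ((-1)*w + 0)) holomorphic_on S" by (simp add: o_def)
  have "(deriv^^(2*k)) F 0 = (deriv^^(2*k)) (\<lambda>w. - F ((-1)*w + 0)) 0"
    by (rule higher_deriv_transform_within_open[OF assms(1) holomorphic_on_minus[OF h1] assms(2,3)])
       (simp add: assms(5))
  also have "\<dots> = - (deriv^^(2*k)) (\<lambda>w. F ((-1)*w + 0)) 0"
    by (rule higher_deriv_uminus[OF h1 assms(2,3)])
  also have "\<dots> = - ((-1)^(2*k) * (deriv^^(2*k)) F ((-1)*0+0))"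
    by (subst higher_deriv_compose_linear'[OF assms(1) assms(2) assms(2) assms(3)]) (use assms(3,4) in auto)
  finally show ?thesis by simp
qed

lemma odd_vanish:
  fixes F :: "complex \<Rightarrow> complex"
  assumes "F holomorphic_on S" "open S" "of_real (pi/2) \<in> S" "\<And>z. z \<in> S \<Longrightarrow> -z + of_real pi \<in> S"
    "\<And>z. F (-z + of_real pi) = F z"
  shows "(deriv^^(2*k+1)) F (of_real (pi/2)) = 0"
proof -
  have sub: "(\<lambda>w. (-1)*w + of_real pi) ` S \<subseteq> S" using assms(4) by auto
  have "(F \<circ> (\<lambda>w. (-1)*w + of_real pi)) holomorphic_on S"
    by (rule holomorphic_on_compose_gen[OF _ assms(1) sub]) (intro holomorphic_intros)
  then have h1: "(\<lambda>w. F ((-1)*w + of_real pi)) holomorphic_on S" by (simp add: o_def)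
  have e: "(-1) * complex_of_real (pi/2) + of_real pi = of_real (pi/2)"
    by (simp add: field_simps)
  have "(deriv^^(2*k+1)) F (of_real (pi/2)) = (deriv^^(2*k+1)) (\<lambda>w. F ((-1)*w + of_real pi)) (of_real (pi/2))"
    by (rule higher_deriv_transform_within_open[OF assms(1) h1 assms(2,3)])
       (metis assms(5) mult_minus1)
  also have "\<dots> = ((-1)^(2*k+1) * (deriv^^(2*k+1)) F ((-1)* of_real (pi/2)+ of_real pi))"
    by (subst higher_deriv_compose_linear'[OF assms(1) assms(2) assms(2) assms(3)]) (use assms(3,4) in auto)
  finally show ?thesis unfolding e by simp
qed



definition h0 :: "real \<Rightarrow> real \<Rightarrow> real \<Rightarrow> real" where
  "h0 d t s = s * (1 + d * s^2) powr (-t/2)"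
definition h1 :: "real \<Rightarrow> real \<Rightarrow> real \<Rightarrow> real" where
  "h1 d t s = (1 + d * s^2) powr (-t/2) * (1 + (1-t) * d * s^2) / (1 + d * s^2)"
definition h2 :: "real \<Rightarrow> real \<Rightarrow> real \<Rightarrow> real" where
  "h2 d t s = - d * s * (1 + d * s^2) powr (-t/2) * (3*t + t * (1-t) * d * s^2) / (1 + d * s^2)^2"

lemma W_pos: "0 \<le> d \<Longrightarrow> 0 < 1 + d * (s::real)^2"
  by (simp add: add_pos_nonneg)

lemma W_deriv: "((\<lambda>s. 1 + c * s^2) has_real_derivative 2 * c * s) (at s)"
  by (auto intro!: derivative_eq_intros)

lemma P_deriv: assumes "0 \<le> d"
  shows "((\<lambda>s. (1 + d * s^2) powr (-t/2)) has_real_derivative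
     (1 + d * s^2) powr (-t/2) * (- t * d * s / (1 + d * s^2))) (at s)"
proof -
  have W: "0 < 1 + d * s^2" using W_pos[OF assms] .
  have "((\<lambda>s. (1 + d * s^2) powr (-t/2)) has_real_derivative
     (1 + d * s^2) powr (-t/2) * (0 * ln (1 + d * s^2) + (2 * d * s) * (-t/2) / (1 + d * s^2))) (at s)"
    by (intro DERIV_powr W W_deriv derivative_intros)
  then show ?thesis by (simp add: field_simps)
qed

lemma h0_deriv: assumes "0 \<le> d" shows "(h0 d t has_real_derivative h1 d t s) (at s)"
proof -
  have W: "0 < 1 + d * s^2" using W_pos[OF assms] .
  have "(h0 d t has_real_derivative s * ((1 + d * s^2) powr (-t/2) * (- t * d * s / (1 + d * s^2))) + 1 * (1 + d * s^2) powr (-t/2)) (at s)"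
    unfolding h0_def[abs_def] by (rule DERIV_mult'[OF DERIV_ident P_deriv[OF assms]])
  moreover have "s * ((1 + d * s^2) powr (-t/2) * (- t * d * s / (1 + d * s^2))) + 1 * (1 + d * s^2) powr (-t/2) = h1 d t s"
    using W unfolding h1_def by (simp add: field_simps power2_eq_square)
  ultimately show ?thesis by simp
qed

lemma alg2: fixes p d s t :: real assumes "0 < 1 + d * s^2"
  shows "(((p * (- t * d * s / (1 + d * s^2))) * (1 + ((1-t) * d) * s^2) + (2 * ((1-t) * d) * s) * p) * (1 + d * s^2) - (p * (1 + ((1-t) * d) * s^2)) * (2 * d * s)) / ((1 + d * s^2) * (1 + d * s^2))
       = - d * s * p * (3*t + t * (1-t) * d * s^2) / (1 + d * s^2)^2"
proof -
  have "(((p * (- t * d * s / (1 + d * s^2))) * (1 + ((1-t) * d) * s^2) + (2 * ((1-t) * d) * s) * p) * (1 + d * s^2) - (p * (1 + ((1-t) * d) * s^2)) * (2 * d * s)) = - d * s * p * (3*t + t * (1-t) * d * s^2)"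
    using assms by (simp add: field_simps power2_eq_square)
  then show ?thesis by (simp add: power2_eq_square)
qed

lemma h1_deriv: assumes "0 \<le> d" shows "(h1 d t has_real_derivative h2 d t s) (at s)"
proof -
  have W: "0 < 1 + d * s^2" using W_pos[OF assms] .
  have R: "((\<lambda>x. (1 + d * x^2) powr (-t/2) * (1 + ((1-t) * d) * x^2) / (1 + d * x^2)) has_real_derivative
    ((((1 + d * s^2) powr (-t/2) * (- t * d * s / (1 + d * s^2))) * (1 + ((1-t) * d) * s^2) + (2 * ((1-t) * d) * s) * (1 + d * s^2) powr (-t/2)) * (1 + d * s^2) - ((1 + d * s^2) powr (-t/2) * (1 + ((1-t) * d) * s^2)) * (2 * d * s)) / ((1 + d * s^2) * (1 + d * s^2))) (at s)"
    by (rule DERIV_divide[OF DERIV_mult[OF P_deriv[OF assms] W_deriv] W_deriv]) (use W in simp)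
  show ?thesis using R alg2[OF W, of "(1 + d * s^2) powr (-t/2)" t] unfolding h1_def[abs_def] h2_def
    by (simp add: mult.assoc mult.commute)
qed


definition dl :: "real \<Rightarrow> real" where
  "dl t = max 0 ((3*t) powr (-2/t) - 1) / (sin t)^2"
definition ph :: "real \<Rightarrow> real \<Rightarrow> real" where
  "ph t r = h0 (dl t) t (sin r)"
definition FF :: "real \<Rightarrow> complex \<Rightarrow> complex" where
  "FF t z = sin z * exp (complex_of_real (-t/2) * Ln (1 + complex_of_real (dl t) * (sin z)^2))"
definition SS :: "real \<Rightarrow> complex set" where
  "SS t = {z. 0 < Re (1 + complex_of_real (dl t) * (sin z)^2)}"

lemma dl_nonneg: "0 \<le> dl t"
  unfolding dl_def by simp

lemma ReFF: "Re (FF t (complex_of_real x)) = ph t x"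
proof -
  have W: "0 < 1 + dl t * (sin x)^2" using W_pos[OF dl_nonneg] .
  have "FF t (complex_of_real x) = complex_of_real (sin x) * exp (complex_of_real (-t/2) * Ln (complex_of_real (1 + dl t * (sin x)^2)))"
    unfolding FF_def by (simp add: sin_of_real)
  also have "\<dots> = complex_of_real (sin x * exp (-t/2 * ln (1 + dl t * (sin x)^2)))"
    by (simp only: Ln_of_real[OF W] of_real_mult[symmetric] exp_of_real)
  finally show ?thesis unfolding ph_def h0_def using W by (simp add: powr_def)
qed

lemma open_SS: "open (SS t)"
  unfolding SS_def by (intro open_Collect_less continuous_intros)

lemma real_SS: "complex_of_real x \<in> SS t"
proof -
  have W: "0 < 1 + dl t * (sin x)^2" using W_pos[OF dl_nonneg] .
  have "Re (1 + complex_of_real (dl t) * (sin (complex_of_real x))^2) = 1 + dl t * (sin x)^2"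
    by (simp add: sin_of_real flip: of_real_power)
  then have "0 < Re (1 + complex_of_real (dl t) * (sin (complex_of_real x))^2)" using W by linarith
  then show ?thesis unfolding SS_def by (simp only: mem_Collect_eq)
qed

lemma sin_sym: "sin (- z + complex_of_real pi) = sin z"
  by (simp add: sin_diff)

lemma SS_neg: "z \<in> SS t \<Longrightarrow> - z \<in> SS t"
  unfolding SS_def by simp

lemma SS_refl: "z \<in> SS t \<Longrightarrow> - z + complex_of_real pi \<in> SS t"
  unfolding SS_def by (simp only: sin_sym mem_Collect_eq)

lemma FF_holo: "FF t holomorphic_on SS t"
proof -
  have "\<And>z. z \<in> SS t \<Longrightarrow> 1 + complex_of_real (dl t) * (sin z)^2 \<notin> \<real>\<^sub>\<le>\<^sub>0"
    unfolding SS_def by (auto simp: complex_nonpos_Reals_iff)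
  then show ?thesis unfolding FF_def[abs_def]
    by (intro holomorphic_intros) auto
qed

lemma FF_odd: "FF t (-z) = - FF t z"
  unfolding FF_def by simp

lemma FF_refl: "FF t (- z + complex_of_real pi) = FF t z"
  unfolding FF_def by (simp only: sin_sym)

definition DD :: "real \<Rightarrow> nat \<Rightarrow> real \<Rightarrow> real" where
  "DD t n x = Re ((deriv^^n) (FF t) (complex_of_real x))"

lemma DD_deriv: "(DD t k has_real_derivative DD t (Suc k) x) (at x within T)"
  unfolding DD_def[abs_def] by (rule hd_complex[OF FF_holo open_SS real_SS])

lemma DD0: "DD t 0 = ph t"
  by (rule ext) (simp add: DD_def ReFF)

lemma DD_even: "DD t (2*k) 0 = 0"
  using even_vanish[OF FF_holo open_SS, of t k] real_SS[of 0 t] SS_neg FF_odd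
  unfolding DD_def by auto

lemma DD_odd: "DD t (2*k+1) (pi/2) = 0"
  using odd_vanish[where k=k, OF FF_holo[of t] open_SS[of t] real_SS SS_refl FF_refl]
  unfolding DD_def by simp

lemma DD1: "DD t 1 x = h1 (dl t) t (sin x) * cos x"
proof -
  have "(ph t has_real_derivative h1 (dl t) t (sin x) * cos x) (at x)"
    unfolding ph_def[abs_def] by (rule DERIV_chain2[OF h0_deriv[OF dl_nonneg] DERIV_sin])
  moreover have "(ph t has_real_derivative DD t 1 x) (at x)"
    using DD_deriv[of t 0 x UNIV] by (simp add: DD0)
  ultimately show ?thesis by (rule DERIV_unique[symmetric])
qed

lemma DD2: "DD t 2 x = h2 (dl t) t (sin x) * cos x * cos x + - sin x * h1 (dl t) t (sin x)"
proof -
  have e: "DD t 1 = (\<lambda>x. h1 (dl t) t (sin x) * cos x)" using DD1 by (rule ext)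
  have "(DD t 1 has_real_derivative h2 (dl t) t (sin x) * cos x * cos x + - sin x * h1 (dl t) t (sin x)) (at x)"
    unfolding e by (rule DERIV_mult[OF DERIV_chain2[OF h1_deriv[OF dl_nonneg] DERIV_sin] DERIV_cos])
  moreover have "(DD t 1 has_real_derivative DD t 2 x) (at x)"
    using DD_deriv[of t 1 x UNIV] by (simp add: numeral_2_eq_2)
  ultimately show ?thesis by (rule DERIV_unique[symmetric])
qed


lemma dl_zero: assumes "1/3 \<le> t" shows "dl t = 0"
proof -
  have "(3*t) powr (-2/t) \<le> 1 powr (-2/t)"
    by (rule powr_mono2') (use assms in \<open>auto simp: divide_simps\<close>)
  then show ?thesis unfolding dl_def by simp
qed

lemma sin_t_pos: assumes "0 < (t::real)" "t \<le> 1" shows "0 < sin t"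
proof (rule sin_gt_zero)
  show "t < pi" using assms pi_gt3 by linarith
qed (use assms in auto)

lemma ph_bound:
  assumes t: "0 < t" "t \<le> 1" and r: "t < r" "r \<le> pi/2"
  shows "ph t r \<le> 3 * t * sin r"
proof -
  define X where "X = (3*t) powr (-2/t)"
  have X: "0 < X" unfolding X_def using t by simp
  have st: "0 < sin t" using sin_t_pos t by auto
  have sr: "sin t \<le> sin r" using t r by (intro sin_monotone_2pi_le) auto
  have dst: "dl t * (sin t)^2 = max 0 (X - 1)" unfolding dl_def X_def using st by simp
  have "dl t * (sin t)^2 \<le> dl t * (sin r)^2"
    using sr st dl_nonneg by (intro mult_left_mono power_mono) auto
  then have WX: "X \<le> 1 + dl t * (sin r)^2" using dst by linarith
  have "(1 + dl t * (sin r)^2) powr (-t/2) \<le> X powr (-t/2)"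
    by (rule powr_mono2') (use t X WX in auto)
  also have "X powr (-t/2) = 3 * t"
    unfolding X_def using t by (simp add: powr_powr)
  finally have "(1 + dl t * (sin r)^2) powr (-t/2) \<le> 3 * t" .
  moreover have "0 \<le> sin r" using st sr by linarith
  ultimately have "sin r * (1 + dl t * (sin r)^2) powr (-t/2) \<le> sin r * (3 * t)"
    by (intro mult_left_mono) auto
  then show ?thesis unfolding ph_def h0_def by (simp add: mult_ac)
qed

lemma ph_range:
  assumes r: "0 \<le> r" "r \<le> pi/2" and t: "0 \<le> t"
  shows "0 \<le> ph t r \<and> ph t r \<le> 1"
proof -
  have s0: "0 \<le> sin r" using r by (intro sin_ge_zero) auto
  have W1: "1 \<le> 1 + dl t * (sin r)^2" using dl_nonneg by simp
  have t0: "(1 + dl t * (sin r)^2) powr (-t/2) \<le> 1"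
    using powr_mono2'[of "-t/2" 1 "1 + dl t * (sin r)^2"] W1 t by simp
  show ?thesis unfolding ph_def h0_def using s0 t0 sin_le_one[of r]
    by (auto intro: mult_le_one)
qed


lemma sin_t_ne: "0 < t \<Longrightarrow> t \<le> 1 \<Longrightarrow> sin (t::real) \<noteq> 0"
  using sin_t_pos by force

lemma ph_cont: "continuous_on ({0<..1} \<times> {0..pi/2}) (\<lambda>(t, r). ph t r)"
proof -
  have e: "(\<lambda>(t, r). ph t r) = (\<lambda>x. sin (snd x) * (1 + (max 0 ((3*fst x) powr (-2/fst x) - 1) / (sin (fst x))^2) * (sin (snd x))^2) powr (-(fst x)/2))"
    by (auto simp: ph_def h0_def dl_def fun_eq_iff)
  have A: "\<And>x. x \<in> {0<..1} \<times> {0..pi/2} \<Longrightarrow> 0 < fst x \<and> 0 < sin (fst x::real)"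
    using sin_t_pos by auto
  have B0: "\<And>x. x \<in> {0<..1} \<times> {0..pi/2} \<Longrightarrow> 1 + (max 0 ((3*(fst x::real)) powr (-2/fst x) - 1) / (sin (fst x))^2) * (sin (snd x))^2 > 0"
    by (intro add_pos_nonneg mult_nonneg_nonneg divide_nonneg_nonneg) auto
  have B: "\<And>x. x \<in> {0<..1} \<times> {0..pi/2} \<Longrightarrow> 1 + (max 0 ((3*(fst x::real)) powr (-2/fst x) - 1) / (sin (fst x))^2) * (sin (snd x))^2 \<noteq> 0"
    using B0 by force
  show ?thesis unfolding e
    by (intro continuous_intros) (use A B in \<open>auto simp: sin_t_ne\<close>)
qed

lemma ph_ineq:
  assumes t: "0 < t" "t \<le> 1" and r: "0 < r" "r < pi/2"
  shows "- DD t 2 r / ph t r \<ge> tan r * DD t 1 r / ph t r \<and>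
         tan r * DD t 1 r / ph t r \<ge> max t (1 - t)"
proof -
  define d where "d = dl t"
  have d: "0 \<le> d" unfolding d_def by (rule dl_nonneg)
  define s where "s = sin r"
  define c where "c = cos r"
  have s: "0 < s" unfolding s_def using r by (intro sin_gt_zero) auto
  have c: "0 < c" unfolding c_def using r by (intro cos_gt_zero) auto
  define W where "W = 1 + d * s^2"
  have W: "0 < W" unfolding W_def using W_pos[OF d] .
  define A where "A = W powr (-t/2)"
  have A: "0 < A" unfolding A_def using W by simp
  define q where "q = 1 + (1-t) * d * s^2"
  have ph: "ph t r = s * A" unfolding ph_def h0_def A_def W_def s_def d_def by simp
  have h1v: "h1 d t s = A * q / W" unfolding h1_def A_def W_def q_def by simp
  have D1: "DD t 1 r = A * q / W * c" using DD1[of t r] h1v unfolding d_def s_def c_def by simp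
  have h2v: "h2 d t s \<le> 0"
  proof -
    have "0 \<le> d * s * A * (3*t + t * (1-t) * d * s^2)"
      using d s A t by (intro mult_nonneg_nonneg add_nonneg_nonneg) auto
    then show ?thesis unfolding h2_def A_def W_def
      by (simp add: divide_nonpos_pos)
  qed
  have D2: "DD t 2 r = h2 d t s * c * c + - s * (A * q / W)"
    using DD2[of t r] h1v unfolding d_def s_def c_def by simp
  have tan: "tan r = s / c" unfolding s_def c_def tan_def by simp
  have T: "tan r * DD t 1 r / ph t r = q / W"
    unfolding tan D1 ph using s c A W by (simp add: field_simps)
  have T2: "- DD t 2 r / ph t r = q / W + (- h2 d t s * c * c) / (s * A)"
    unfolding D2 ph using s c A W by (simp add: field_simps)
  have "0 \<le> (- h2 d t s * c * c) / (s * A)"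
    using h2v s c A by (intro divide_nonneg_pos mult_nonneg_nonneg) auto
  then have G1: "- DD t 2 r / ph t r \<ge> tan r * DD t 1 r / ph t r" unfolding T T2 by simp
  have "(1 - t) * W \<le> q" unfolding W_def q_def using t by (simp add: algebra_simps)
  then have q1: "1 - t \<le> q / W" using W by (simp add: pos_le_divide_eq)
  have q2: "t \<le> q / W"
  proof (cases "1/3 \<le> t")
    case True
    then have "d = 0" unfolding d_def by (rule dl_zero)
    then show ?thesis unfolding q_def W_def using t by simp
  next
    case False
    then show ?thesis using q1 by linarith
  qed
  show ?thesis using G1 T q1 q2 by simp
qed

theorem lemma3p3:
  shows "\<exists>\<phi> :: real \<Rightarrow> real \<Rightarrow> real.
    continuous_on ({0<..1} \<times> {0..pi/2}) (\<lambda>(t, r). \<phi> t r) \<and>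
    (\<forall>t\<in>{0<..1}.
      (\<forall>r\<in>{0..pi/2}. \<phi> t r \<in> {0..1}) \<and>
      (\<exists>D. higher_derivs_on D (\<phi> t) {0..pi/2} \<and>
        (\<forall>k. D (2*k) 0 = 0) \<and> D 1 0 = 1 \<and>
        (\<forall>k. D (2*k+1) (pi/2) = 0) \<and> \<phi> t (pi/2) > 0 \<and>
        (\<forall>r\<in>{t<..pi/2}. \<phi> t r \<le> 3 * t * sin r) \<and>
        (\<forall>r\<in>{0<..<pi/2}.
           - D 2 r / \<phi> t r \<ge> tan r * D 1 r / \<phi> t r \<and>
           tan r * D 1 r / \<phi> t r \<ge> max t (1 - t))))"
proof (intro exI[of _ ph] conjI ballI)
  show "continuous_on ({0<..1} \<times> {0..pi/2}) (\<lambda>(t, r). ph t r)" by (rule ph_cont)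
next
  fix t r :: real assume t: "t \<in> {0<..1}" and r: "r \<in> {0..pi/2}"
  show "ph t r \<in> {0..1}" using ph_range[of r t] t r by auto
next
  fix t :: real assume t: "t \<in> {0<..1}"
  show "\<exists>D. higher_derivs_on D (ph t) {0..pi/2} \<and>
        (\<forall>k. D (2*k) 0 = 0) \<and> D 1 0 = 1 \<and>
        (\<forall>k. D (2*k+1) (pi/2) = 0) \<and> ph t (pi/2) > 0 \<and>
        (\<forall>r\<in>{t<..pi/2}. ph t r \<le> 3 * t * sin r) \<and>
        (\<forall>r\<in>{0<..<pi/2}.
           - D 2 r / ph t r \<ge> tan r * D 1 r / ph t r \<and>
           tan r * D 1 r / ph t r \<ge> max t (1 - t))"
  proof (intro exI[of _ "DD t"] conjI allI ballI)
    show "higher_derivs_on (DD t) (ph t) {0..pi/2}"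
      unfolding higher_derivs_on_def using DD0 DD_deriv by blast
  next
    fix k show "DD t (2*k) 0 = 0" by (rule DD_even)
  next
    show "DD t 1 0 = 1" using DD1[of t 0] by (simp add: h1_def)
  next
    fix k show "DD t (2*k+1) (pi/2) = 0" by (rule DD_odd)
  next
    have "0 < (1 + dl t) powr (-t/2)" using dl_nonneg[of t] by simp
    then show "ph t (pi/2) > 0" unfolding ph_def h0_def by simp
  next
    fix r assume "r \<in> {t<..pi/2}"
    then show "ph t r \<le> 3 * t * sin r" using ph_bound[of t r] t by auto
  next
    fix r assume "r \<in> {0<..<pi/2}"
    then show "- DD t 2 r / ph t r \<ge> tan r * DD t 1 r / ph t r"
      using ph_ineq[of t r] t by auto
  next
    fix r assume "r \<in> {0<..<pi/2}"
    then show "tan r * DD t 1 r / ph t r \<ge> max t (1 - t)"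
      using ph_ineq[of t r] t by auto
  qed
qed

end
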